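(* Let $H$ be a graph and $H'$ any graph in the splitting family $\mathcal{H}(H)$. Then $\nu(H')\ge \nu(H)$.
   Context: $\nu(G)$ is the matching number of $G$. A vertex split on a vertex $v$ of $H$ replaces $v$ by an independent set of $d(v)$ new vertices, each adjacent to exactly one vertex of $N_H(v)$, distinct new vertices being adjacent to distinct neighbours. A vertex split on a set $U\subseteq V(H)$ means applying vertex splits to the vertices of $U$ one by one. The splitting family $\mathcal{H}(H)$ is the family of all graphs obtained from $H$ by applying a vertex split on some $U\subseteq V(H)$. *)

theory Defs
  imports Main
begin

definition graph :: "'a set \<Rightarrow> 'a set set \<Rightarrow> bool" where
  "graph V E \<longleftrightarrow> finite V \<and> (\<forall>e\<in>E. e \<subseteq> V \<and> card e = 2)"

definition matching :: "'a set set \<Rightarrow> 'a set set \<Rightarrow> bool" where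
  "matching E M \<longleftrightarrow> M \<subseteq> E \<and> (\<forall>e1\<in>M. \<forall>e2\<in>M. e1 \<noteq> e2 \<longrightarrow> e1 \<inter> e2 = {})"

definition matching_number :: "'a set set \<Rightarrow> nat" where
  "matching_number E = Max (card ` {M. matching E M})"

text \<open>A vertex x in U is replaced by new vertices Inr (x, e),
  one for each edge e incident to x (i.e. one per neighbour); the vertex Inr (x, e)
  is adjacent only to the endpoint (or its copy) of e other than x.\<close>
definition split_rep :: "'a set \<Rightarrow> 'a set \<Rightarrow> 'a \<Rightarrow> 'a + ('a \<times> 'a set)" where
  "split_rep U e x = (if x \<in> U then Inr (x, e) else Inl x)"

definition split_verts :: "'a set \<Rightarrow> 'a set set \<Rightarrow> 'a set \<Rightarrow> ('a + ('a \<times> 'a set)) set" where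
  "split_verts V E U = Inl ` (V - U) \<union> {Inr (x, e) | x e. x \<in> U \<and> e \<in> E \<and> x \<in> e}"

definition split_edges :: "'a set set \<Rightarrow> 'a set \<Rightarrow> ('a + ('a \<times> 'a set)) set set" where
  "split_edges E U = (\<lambda>e. split_rep U e ` e) ` E"

end

theory Submission
  imports Defs
begin

definition unsp :: "'a + ('a \<times> 'a set) \<Rightarrow> 'a" where
  "unsp z = (case z of Inl x \<Rightarrow> x | Inr p \<Rightarrow> fst p)"

lemma unsp_img: "unsp ` (split_rep U e ` e) = e"
proof
  show "unsp ` (split_rep U e ` e) \<subseteq> e"
    by (auto simp: unsp_def split_rep_def)
  show "e \<subseteq> unsp ` (split_rep U e ` e)"
  proof
    fix x assume "x \<in> e"
    moreover have "unsp (split_rep U e x) = x" by (simp add: unsp_def split_rep_def)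
    ultimately show "x \<in> unsp ` (split_rep U e ` e)" by (metis image_eqI)
  qed
qed

theorem lemma2p3:
  fixes V U :: "'a set" and E :: "'a set set"
  assumes "graph V E" and "U \<subseteq> V"
  shows "matching_number (split_edges E U) \<ge> matching_number E"
proof -
  define f where "f = (\<lambda>e. split_rep U e ` e)"
  have finE: "finite E"
    using assms(1) unfolding graph_def by (meson Pow_iff finite_Pow_iff finite_subset subsetI)
  have fin1: "finite {M. matching E M}"
    using finE by (rule finite_subset[rotated, OF finite_Pow_iff[THEN iffD2]]) (auto simp: matching_def)
  have ne1: "{M. matching E M} \<noteq> {}" by (auto simp: matching_def intro!: exI[of _ "{}"])
  have finE2: "finite (split_edges E U)" using finE by (simp add: split_edges_def)
  have fin2: "finite {M. matching (split_edges E U) M}"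
    using finE2 by (rule finite_subset[rotated, OF finite_Pow_iff[THEN iffD2]]) (auto simp: matching_def)
  obtain M where M: "matching E M" "card M = matching_number E"
  proof -
    have "matching_number E \<in> card ` {M. matching E M}"
      unfolding matching_number_def using fin1 ne1 by (intro Max_in) auto
    then show ?thesis using that by auto
  qed
  have inj: "inj_on f E"
    by (rule inj_on_inverseI[where g="\<lambda>s. unsp ` s"]) (simp add: f_def unsp_img)
  have MsE: "M \<subseteq> E" using M(1) by (simp add: matching_def)
  have match: "matching (split_edges E U) (f ` M)"
    unfolding matching_def
  proof (intro conjI ballI impI)
    show "f ` M \<subseteq> split_edges E U" using MsE by (auto simp: f_def split_edges_def)
  next
    fix a b assume "a \<in> f ` M" "b \<in> f ` M" "a \<noteq> b"
    then obtain e1 e2 where e: "e1 \<in> M" "e2 \<in> M" "a = f e1" "b = f e2" "e1 \<noteq> e2" by auto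
    then have dis: "e1 \<inter> e2 = {}" using M(1) by (simp add: matching_def)
    show "a \<inter> b = {}"
    proof (rule ccontr)
      assume "a \<inter> b \<noteq> {}"
      then obtain z where "z \<in> f e1" "z \<in> f e2" using e by auto
      then obtain x y where "x \<in> e1" "y \<in> e2" "split_rep U e1 x = split_rep U e2 y"
        by (auto simp: f_def)
      then show False using dis e(5) by (auto simp: split_rep_def split: if_splits)
    qed
  qed
  have "card (f ` M) = card M" using card_image inj MsE inj_on_subset by metis
  moreover have "card (f ` M) \<le> matching_number (split_edges E U)"
    unfolding matching_number_def using match fin2 by (intro Max_ge) auto
  ultimately show ?thesis using M(2) by simp
qed

end
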